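(* Let $X$ be a real Banach space, $F$ a non-empty closed bounded subset of $X$, and $x\in X$ with $Q_F(x)\neq\emptyset$. The following are equivalent. (1) Every maximizing sequence in $F$ for $x$ converges. (2) $\mathrm{diam}(Q_F(x,\frac1n))\to0$. (3) $Q_F(x)$ is a singleton and $Q_F(x,\frac1n)\xrightarrow{V}Q_F(x)$. (4) $Q_F(x)$ is a singleton and $Q_F(x,\frac1n)\xrightarrow{H}Q_F(x)$. (5) $F$ is SUR at $x$.
   Context: $B_X$ is the closed unit ball. $r(F,x)=\sup_{y\in F}\|x-y\|$, $Q_F(x,\delta)=\{y\in F:\|x-y\|\ge r(F,x)-\delta\}$ for $\delta\ge0$, $Q_F(x)=Q_F(x,0)$. A maximizing sequence in $F$ for $x$ is a sequence $(y_n)$ in $F$ with $\|x-y_n\|\to r(F,x)$. $F$ is SUR at $x$ if $Q_F(x)$ is a singleton and for every $\epsilon>0$ there is $\delta>0$ with $Q_F(x,\delta)\subseteq Q_F(x)+\epsilon B_X$. For closed bounded sets $C_n,C_0$: $C_n\xrightarrow{V}C_0$ means both (a) for every open $U\supseteq C_0$, eventually $C_n\subseteq U$, and (b) for every open $U$ with $C_0\cap U\ne\emptyset$, eventually $C_n\cap U\neq\emptyset$; $C_n\xrightarrow{H}C_0$ means for every $\epsilon>0$, eventually $C_n\subseteq C_0+\epsilon B_X$ and $C_0\subseteq C_n+\epsilon B_X$. *)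

theory Defs
  imports "HOL-Analysis.Analysis"
begin

definition far_rad :: "'a::real_normed_vector set \<Rightarrow> 'a \<Rightarrow> real" where
  "far_rad F x = (SUP y\<in>F. norm (x - y))"

definition farQ :: "'a::real_normed_vector set \<Rightarrow> 'a \<Rightarrow> real \<Rightarrow> 'a set" where
  "farQ F x \<delta> = {y \<in> F. norm (x - y) \<ge> far_rad F x - \<delta>}"

definition maximizing_seq :: "'a::real_normed_vector set \<Rightarrow> 'a \<Rightarrow> (nat \<Rightarrow> 'a) \<Rightarrow> bool" where
  "maximizing_seq F x y \<longleftrightarrow> (\<forall>n. y n \<in> F) \<and> ((\<lambda>n. norm (x - y n)) \<longlonglongrightarrow> far_rad F x)"

definition set_thicken :: "'a::real_normed_vector set \<Rightarrow> real \<Rightarrow> 'a set" where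
  "set_thicken A \<epsilon> = {a + b | a b. a \<in> A \<and> norm b \<le> \<epsilon>}"

definition SUR_at :: "'a::real_normed_vector set \<Rightarrow> 'a \<Rightarrow> bool" where
  "SUR_at F x \<longleftrightarrow> (\<exists>y. farQ F x 0 = {y}) \<and>
     (\<forall>\<epsilon>>0. \<exists>\<delta>>0. farQ F x \<delta> \<subseteq> set_thicken (farQ F x 0) \<epsilon>)"

definition vietoris_conv :: "(nat \<Rightarrow> 'a::real_normed_vector set) \<Rightarrow> 'a set \<Rightarrow> bool" where
  "vietoris_conv C C0 \<longleftrightarrow>
     (\<forall>U. open U \<and> C0 \<subseteq> U \<longrightarrow> (\<forall>\<^sub>F n in sequentially. C n \<subseteq> U)) \<and>
     (\<forall>U. open U \<and> C0 \<inter> U \<noteq> {} \<longrightarrow> (\<forall>\<^sub>F n in sequentially. C n \<inter> U \<noteq> {}))"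

definition hausdorff_conv :: "(nat \<Rightarrow> 'a::real_normed_vector set) \<Rightarrow> 'a set \<Rightarrow> bool" where
  "hausdorff_conv C C0 \<longleftrightarrow>
     (\<forall>\<epsilon>>0. \<forall>\<^sub>F n in sequentially. C n \<subseteq> set_thicken C0 \<epsilon> \<and> C0 \<subseteq> set_thicken (C n) \<epsilon>)"

end

theory Submission
  imports Defs
begin

lemma le_rad:
  assumes "bounded F" "y \<in> F"
  shows "norm (x - y) \<le> far_rad F x"
proof -
  obtain B where B: "\<forall>z\<in>F. norm z \<le> B" using assms(1) bounded_iff by blast
  have "bdd_above ((\<lambda>y. norm (x - y)) ` F)"
  proof (rule bdd_aboveI2)
    fix z assume "z \<in> F"
    then show "norm (x - z) \<le> norm x + B"
      using B norm_triangle_ineq4[of x z] by fastforce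
  qed
  then show ?thesis unfolding far_rad_def using assms(2) by (rule cSUP_upper2) simp
qed

lemma Q_mono: "d \<le> d' \<Longrightarrow> farQ F x d \<subseteq> farQ F x d'"
  unfolding farQ_def by auto

lemma Q_sub: "farQ F x d \<subseteq> F"
  unfolding farQ_def by auto

lemma Q0_eq: "bounded F \<Longrightarrow> y \<in> farQ F x 0 \<Longrightarrow> norm (x - y) = far_rad F x"
  using le_rad[of F y x] unfolding farQ_def by force

lemma thicken_single: "set_thicken {q} e = cball q e"
proof
  show "set_thicken {q} e \<subseteq> cball q e"
    unfolding set_thicken_def by (auto simp: dist_norm)
  show "cball q e \<subseteq> set_thicken {q} e"
  proof
    fix y assume "y \<in> cball q e"
    then have "norm (y - q) \<le> e" by (simp add: dist_norm norm_minus_commute)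
    moreover have "y = q + (y - q)" by simp
    ultimately show "y \<in> set_thicken {q} e" unfolding set_thicken_def by blast
  qed
qed

lemma ev_small:
  assumes "(d::real) > 0"
  shows "\<forall>\<^sub>F n in sequentially. 1 / real n \<le> d \<and> n \<ge> 1"
proof -
  obtain N :: nat where N: "1 / d < real N" using reals_Archimedean2 by blast
  have "\<forall>n\<ge>N + 1. 1 / real n \<le> d \<and> n \<ge> 1"
  proof (intro allI impI conjI)
    fix n :: nat assume n: "n \<ge> N + 1"
    then have "1 / d < real n" using N by linarith
    then have "1 < d * real n" using assms by (simp add: field_simps)
    then show "1 / real n \<le> d" using n by (simp add: field_simps)
    show "n \<ge> 1" using n by simp
  qed
  then show ?thesis unfolding eventually_sequentially by blast
qed

definition Kp :: "'a::real_normed_vector set \<Rightarrow> 'a \<Rightarrow> bool" where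
  "Kp F x \<longleftrightarrow> (\<exists>q. farQ F x 0 = {q} \<and> (\<forall>e>0. \<exists>d>0. farQ F x d \<subseteq> cball q e))"

lemma K_SUR: "SUR_at F x \<longleftrightarrow> Kp F x"
  unfolding SUR_at_def Kp_def by (auto simp: thicken_single)

lemma K_haus:
  shows "((\<exists>y. farQ F x 0 = {y}) \<and> hausdorff_conv (\<lambda>n. farQ F x (1 / real n)) (farQ F x 0))
     \<longleftrightarrow> Kp F x"
proof
  assume H: "(\<exists>y. farQ F x 0 = {y}) \<and> hausdorff_conv (\<lambda>n. farQ F x (1 / real n)) (farQ F x 0)"
  then obtain q where q: "farQ F x 0 = {q}" by blast
  have "\<exists>d>0. farQ F x d \<subseteq> cball q e" if e: "e > 0" for e
  proof -
    have "\<forall>\<^sub>F n in sequentially. farQ F x (1 / real n) \<subseteq> set_thicken {q} e \<and> {q} \<subseteq> set_thicken (farQ F x (1 / real n)) e"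
      using H e unfolding hausdorff_conv_def q by blast
    then have "\<forall>\<^sub>F n in sequentially. farQ F x (1 / real n) \<subseteq> cball q e"
      by (rule eventually_mono) (simp add: thicken_single)
    then have "\<forall>\<^sub>F n in sequentially. farQ F x (1 / real n) \<subseteq> cball q e \<and> n \<ge> 1"
      using eventually_ge_at_top[of 1] by (rule eventually_conj)
    then obtain n where "farQ F x (1 / real n) \<subseteq> cball q e" "n \<ge> 1"
      by (auto dest!: eventually_happens)
    then show ?thesis by (intro exI[of _ "1 / real n"]) auto
  qed
  then show "Kp F x" unfolding Kp_def using q by blast
next
  assume "Kp F x"
  then obtain q where q: "farQ F x 0 = {q}" and K: "\<forall>e>0. \<exists>d>0. farQ F x d \<subseteq> cball q e"
    unfolding Kp_def by blast
  have "\<forall>\<^sub>F n in sequentially. farQ F x (1 / real n) \<subseteq> set_thicken {q} e \<and> {q} \<subseteq> set_thicken (farQ F x (1 / real n)) e"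
    if e: "e > 0" for e
  proof -
    obtain d where d: "d > 0" "farQ F x d \<subseteq> cball q e" using K e by blast
    show ?thesis using ev_small[OF d(1)]
    proof (rule eventually_mono)
      fix n assume n: "1 / real n \<le> d \<and> n \<ge> 1"
      have "farQ F x (1 / real n) \<subseteq> cball q e" using Q_mono[of "1 / real n" d F x] n d by auto
      moreover have "q \<in> farQ F x (1 / real n)" using Q_mono[of 0 "1 / real n" F x] q by auto
      then have "q + 0 \<in> set_thicken (farQ F x (1 / real n)) e"
        unfolding set_thicken_def using e by fastforce
      ultimately show "farQ F x (1 / real n) \<subseteq> set_thicken {q} e \<and> {q} \<subseteq> set_thicken (farQ F x (1 / real n)) e"
        by (simp add: thicken_single)
    qed
  qed
  then show "(\<exists>y. farQ F x 0 = {y}) \<and> hausdorff_conv (\<lambda>n. farQ F x (1 / real n)) (farQ F x 0)"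
    unfolding hausdorff_conv_def q by blast
qed

lemma K_viet:
  shows "((\<exists>y. farQ F x 0 = {y}) \<and> vietoris_conv (\<lambda>n. farQ F x (1 / real n)) (farQ F x 0))
     \<longleftrightarrow> Kp F x"
proof
  assume H: "(\<exists>y. farQ F x 0 = {y}) \<and> vietoris_conv (\<lambda>n. farQ F x (1 / real n)) (farQ F x 0)"
  then obtain q where q: "farQ F x 0 = {q}" by blast
  have "\<exists>d>0. farQ F x d \<subseteq> cball q e" if e: "e > 0" for e
  proof -
    have "\<forall>\<^sub>F n in sequentially. farQ F x (1 / real n) \<subseteq> ball q e"
      using H e unfolding vietoris_conv_def q by auto
    then have "\<forall>\<^sub>F n in sequentially. farQ F x (1 / real n) \<subseteq> ball q e \<and> n \<ge> 1"
      using eventually_ge_at_top[of 1] by (rule eventually_conj)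
    then obtain n where "farQ F x (1 / real n) \<subseteq> ball q e" "n \<ge> 1"
      by (auto dest!: eventually_happens)
    then show ?thesis by (intro exI[of _ "1 / real n"]) auto
  qed
  then show "Kp F x" unfolding Kp_def using q by blast
next
  assume "Kp F x"
  then obtain q where q: "farQ F x 0 = {q}" and K: "\<forall>e>0. \<exists>d>0. farQ F x d \<subseteq> cball q e"
    unfolding Kp_def by blast
  have A: "\<forall>\<^sub>F n in sequentially. farQ F x (1 / real n) \<subseteq> U" if U: "open U" "{q} \<subseteq> U" for U
  proof -
    obtain e where e: "e > 0" "ball q e \<subseteq> U" using U openE by blast
    obtain d where d: "d > 0" "farQ F x d \<subseteq> cball q (e/2)" using K e by (meson half_gt_zero)
    show ?thesis using ev_small[OF d(1)]
    proof (rule eventually_mono)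
      fix n assume n: "1 / real n \<le> d \<and> n \<ge> 1"
      have "farQ F x (1 / real n) \<subseteq> cball q (e/2)" using Q_mono[of "1 / real n" d F x] n d by auto
      also have "\<dots> \<subseteq> ball q e" using e by auto
      finally show "farQ F x (1 / real n) \<subseteq> U" using e by auto
    qed
  qed
  have B: "\<forall>\<^sub>F n in sequentially. farQ F x (1 / real n) \<inter> U \<noteq> {}" if U: "{q} \<inter> U \<noteq> {}" for U
  proof -
    have "q \<in> farQ F x (1 / real n)" for n using Q_mono[of 0 "1 / real n" F x] q by auto
    then show ?thesis using U by (intro always_eventually) blast
  qed
  show "(\<exists>y. farQ F x 0 = {y}) \<and> vietoris_conv (\<lambda>n. farQ F x (1 / real n)) (farQ F x 0)"
    unfolding vietoris_conv_def q using A B by blast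
qed

lemma K_diam:
  assumes "bounded F" "farQ F x 0 \<noteq> {}"
  shows "((\<lambda>n. diameter (farQ F x (1 / real n))) \<longlonglongrightarrow> 0) \<longleftrightarrow> Kp F x"
proof
  assume D: "(\<lambda>n. diameter (farQ F x (1 / real n))) \<longlonglongrightarrow> 0"
  have bQ: "bounded (farQ F x d)" for d using Q_sub assms(1) bounded_subset by blast
  have "diameter (farQ F x 0) \<le> diameter (farQ F x (1 / real n))" for n
    by (rule diameter_subset[OF Q_mono bQ]) simp
  then have d0: "diameter (farQ F x 0) \<le> 0"
    by (intro LIMSEQ_le_const[OF D]) auto
  obtain q where qQ: "q \<in> farQ F x 0" using assms(2) by blast
  have q: "farQ F x 0 = {q}"
  proof -
    have "y = q" if "y \<in> farQ F x 0" for y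
      using diameter_bounded_bound[OF bQ that qQ] d0 dist_le_zero_iff by (metis order_trans)
    then show ?thesis using qQ by blast
  qed
  have "\<exists>d>0. farQ F x d \<subseteq> cball q e" if e: "e > 0" for e
  proof -
    have "\<forall>\<^sub>F n in sequentially. dist (diameter (farQ F x (1 / real n))) 0 < e \<and> n \<ge> 1"
      using D e eventually_ge_at_top[of 1] unfolding tendsto_iff by (auto intro: eventually_conj)
    then obtain n where n: "dist (diameter (farQ F x (1 / real n))) 0 < e" "n \<ge> 1"
      by (auto dest!: eventually_happens)
    have "farQ F x (1 / real n) \<subseteq> cball q e"
    proof
      fix y assume y: "y \<in> farQ F x (1 / real n)"
      have "q \<in> farQ F x (1 / real n)" using Q_mono[of 0 "1 / real n" F x] qQ by auto
      then have "dist q y \<le> diameter (farQ F x (1 / real n))"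
        using diameter_bounded_bound[OF bQ _ y] by blast
      then show "y \<in> cball q e" using n by auto
    qed
    then show ?thesis using n by (intro exI[of _ "1 / real n"]) auto
  qed
  then show "Kp F x" unfolding Kp_def using q by blast
next
  assume "Kp F x"
  then obtain q where q: "farQ F x 0 = {q}" and K: "\<forall>e>0. \<exists>d>0. farQ F x d \<subseteq> cball q e"
    unfolding Kp_def by blast
  show "(\<lambda>n. diameter (farQ F x (1 / real n))) \<longlonglongrightarrow> 0"
    unfolding tendsto_iff
  proof (intro allI impI)
    fix e :: real assume e: "e > 0"
    obtain d where d: "d > 0" "farQ F x d \<subseteq> cball q (e/3)" using K e by (meson divide_pos_pos zero_less_numeral)
    show "\<forall>\<^sub>F n in sequentially. dist (diameter (farQ F x (1 / real n))) 0 < e"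
      using ev_small[OF d(1)]
    proof (rule eventually_mono)
      fix n assume n: "1 / real n \<le> d \<and> n \<ge> 1"
      have sub: "farQ F x (1 / real n) \<subseteq> cball q (e/3)" using Q_mono[of "1 / real n" d F x] n d by auto
      have "diameter (farQ F x (1 / real n)) \<le> 2 * (e/3)"
      proof (rule diameter_le)
        show "farQ F x (1 / real n) \<noteq> {} \<or> 0 \<le> 2 * (e/3)" using e by simp
        fix y z assume "y \<in> farQ F x (1 / real n)" "z \<in> farQ F x (1 / real n)"
        then have "dist q y \<le> e/3" "dist q z \<le> e/3" using sub by auto
        then show "norm (y - z) \<le> 2 * (e/3)"
          using dist_triangle3[of y z q] by (simp add: dist_norm)
      qed
      moreover have "0 \<le> diameter (farQ F x (1 / real n))"
        by (rule diameter_ge_0[OF bounded_subset[OF assms(1) Q_sub]])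
      ultimately show "dist (diameter (farQ F x (1 / real n))) 0 < e" using e by simp
    qed
  qed
qed


lemma K_max:
  assumes "closed F" "bounded F" "farQ F x 0 \<noteq> {}"
  shows "(\<forall>y. maximizing_seq F x y \<longrightarrow> convergent y) \<longleftrightarrow> Kp F x"
proof
  assume C: "\<forall>y. maximizing_seq F x y \<longrightarrow> convergent y"
  obtain q where qQ: "q \<in> farQ F x 0" using assms(3) by blast
  have pq: "p = q" if pQ: "p \<in> farQ F x 0" for p
  proof -
    define z where "z = (\<lambda>n::nat. if even n then p else q)"
    have zF: "z n \<in> F" for n using pQ qQ Q_sub unfolding z_def by auto
    have "norm (x - z n) = far_rad F x" for n
      using Q0_eq[OF assms(2) pQ] Q0_eq[OF assms(2) qQ] unfolding z_def by auto
    then have "maximizing_seq F x z" unfolding maximizing_seq_def using zF by simp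
    then obtain L where L: "z \<longlonglongrightarrow> L" using C unfolding convergent_def by blast
    have s1: "strict_mono (\<lambda>n::nat. 2 * n)" by (simp add: strict_mono_def)
    have s2: "strict_mono (\<lambda>n::nat. 2 * n + 1)" by (simp add: strict_mono_def)
    have "(z \<circ> (\<lambda>n. 2 * n)) \<longlonglongrightarrow> L" by (rule LIMSEQ_subseq_LIMSEQ[OF L s1])
    moreover have "z \<circ> (\<lambda>n. 2 * n) = (\<lambda>n. p)" unfolding z_def by auto
    ultimately have "p = L" using LIMSEQ_unique tendsto_const by metis
    have "(z \<circ> (\<lambda>n. 2 * n + 1)) \<longlonglongrightarrow> L" by (rule LIMSEQ_subseq_LIMSEQ[OF L s2])
    moreover have "z \<circ> (\<lambda>n. 2 * n + 1) = (\<lambda>n. q)" unfolding z_def by auto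
    ultimately have "q = L" using LIMSEQ_unique tendsto_const by metis
    then show ?thesis using \<open>p = L\<close> by simp
  qed
  then have q: "farQ F x 0 = {q}" using qQ by blast
  have "\<exists>d>0. farQ F x d \<subseteq> cball q e" if e: "e > 0" for e
  proof (rule ccontr)
    assume "\<not> (\<exists>d>0. farQ F x d \<subseteq> cball q e)"
    then have "\<forall>d>0. \<exists>y. y \<in> farQ F x d \<and> dist q y > e" by (auto simp: subset_iff not_le)
    then have "\<forall>n. \<exists>y. y \<in> farQ F x (inverse (real (Suc n))) \<and> dist q y > e" by simp
    then obtain c where c: "\<And>n. c n \<in> farQ F x (inverse (real (Suc n)))" "\<And>n. dist q (c n) > e"
      by metis
    have cF: "c n \<in> F" for n using c(1) Q_sub by blast
    have lo: "far_rad F x - inverse (real (Suc n)) \<le> norm (x - c n)" for n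
      using c(1)[of n] unfolding farQ_def by auto
    have hi: "norm (x - c n) \<le> far_rad F x" for n using le_rad[OF assms(2) cF] .
    have lim1: "(\<lambda>n. far_rad F x - inverse (real (Suc n))) \<longlonglongrightarrow> far_rad F x"
      using tendsto_diff[OF tendsto_const LIMSEQ_inverse_real_of_nat] by simp
    have nlim: "(\<lambda>n. norm (x - c n)) \<longlonglongrightarrow> far_rad F x"
      by (rule tendsto_sandwich[OF _ _ lim1 tendsto_const]) (use lo hi in auto)
    then have "maximizing_seq F x c" unfolding maximizing_seq_def using cF by simp
    then obtain L where L: "c \<longlonglongrightarrow> L" using C unfolding convergent_def by blast
    have LF: "L \<in> F" using closed_sequentially[OF assms(1) _ L] cF by blast
    have "(\<lambda>n. norm (x - c n)) \<longlonglongrightarrow> norm (x - L)" by (intro tendsto_intros L)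
    then have "norm (x - L) = far_rad F x" using nlim LIMSEQ_unique by blast
    then have "L \<in> farQ F x 0" using LF unfolding farQ_def by simp
    then have "L = q" using q by blast
    then have "\<forall>\<^sub>F n in sequentially. dist (c n) q < e" using L e unfolding tendsto_iff by blast
    then obtain n where "dist (c n) q < e" by (auto dest!: eventually_happens)
    then show False using c(2)[of n] by (simp add: dist_commute)
  qed
  then show "Kp F x" unfolding Kp_def using q by blast
next
  assume "Kp F x"
  then obtain q where q: "farQ F x 0 = {q}" and K: "\<forall>e>0. \<exists>d>0. farQ F x d \<subseteq> cball q e"
    unfolding Kp_def by blast
  show "\<forall>y. maximizing_seq F x y \<longrightarrow> convergent y"
  proof (intro allI impI)
    fix y assume M: "maximizing_seq F x y"
    have "y \<longlonglongrightarrow> q" unfolding tendsto_iff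
    proof (intro allI impI)
      fix e :: real assume e: "e > 0"
      obtain d where d: "d > 0" "farQ F x d \<subseteq> cball q (e/2)" using K e by (meson half_gt_zero)
      have "\<forall>\<^sub>F n in sequentially. dist (norm (x - y n)) (far_rad F x) < d"
        using M d(1) unfolding maximizing_seq_def tendsto_iff by blast
      then show "\<forall>\<^sub>F n in sequentially. dist (y n) q < e"
      proof (rule eventually_mono)
        fix n assume "dist (norm (x - y n)) (far_rad F x) < d"
        then have "far_rad F x - d \<le> norm (x - y n)" by (simp add: dist_real_def)
        then have "y n \<in> farQ F x d" using M unfolding maximizing_seq_def farQ_def by simp
        then have "dist q (y n) \<le> e/2" using d by auto
        then show "dist (y n) q < e" using e by (simp add: dist_commute)
      qed
    qed
    then show "convergent y" unfolding convergent_def by blast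
  qed
qed

theorem theorem2p6:
  fixes F :: "'a::banach set" and x :: 'a
  assumes "F \<noteq> {}" and "closed F" and "bounded F" and "farQ F x 0 \<noteq> {}"
  shows "((\<forall>y. maximizing_seq F x y \<longrightarrow> convergent y)
            \<longleftrightarrow> ((\<lambda>n. diameter (farQ F x (1 / real n))) \<longlonglongrightarrow> 0))
       \<and> (((\<lambda>n. diameter (farQ F x (1 / real n))) \<longlonglongrightarrow> 0)
            \<longleftrightarrow> ((\<exists>y. farQ F x 0 = {y}) \<and> vietoris_conv (\<lambda>n. farQ F x (1 / real n)) (farQ F x 0)))
       \<and> (((\<exists>y. farQ F x 0 = {y}) \<and> vietoris_conv (\<lambda>n. farQ F x (1 / real n)) (farQ F x 0))
            \<longleftrightarrow> ((\<exists>y. farQ F x 0 = {y}) \<and> hausdorff_conv (\<lambda>n. farQ F x (1 / real n)) (farQ F x 0)))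
       \<and> (((\<exists>y. farQ F x 0 = {y}) \<and> hausdorff_conv (\<lambda>n. farQ F x (1 / real n)) (farQ F x 0))
            \<longleftrightarrow> SUR_at F x)"
  using K_max[OF assms(2,3,4)] K_diam[OF assms(3,4)] K_viet[of F x] K_haus[of F x] K_SUR[of F x]
  by blast

end
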